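(* For a round $t$, let $\mathrm{var}_{\sup}(t)$ be the supremum of $\mathrm{var}(X_a(t,\mathrm{ALG}))$ over all $n\ge1$, all assignments of densities $\Phi_a\in\mathcal F$ to the $n$ sensors, all synchronous independent meeting patterns of depth at least $t$, and all sensors $a$. Then $\lim_{t\to\infty}\mathrm{var}_{\sup}(t)=0$.
   Context: Model. Fix a finite set $\mathcal F$ of smooth probability densities on $\mathbb R$, each with mean zero and finite positive variance (smooth: positive everywhere, differentiable, with $\int\Phi'^2/\Phi<\infty$). One element $N\in\mathcal F$ is the noise density; $\mathrm{var}(N)$ is its variance. There are $n$ sensors; each sensor $a$ is assigned $\Phi_a\in\mathcal F$. An unknown $\tau^*\in\mathbb R$ is fixed, and the initial opinions $X_a(0)$ are independent, $X_a(0)$ having density $\Phi_a(x-\tau^* )$. Rounds are $t=0,1,2,\dots$. A meeting pattern specifies in advance, for each round $t$ and each sensor $a$, at most one other sensor $b$ that $a$ observes at round $t$. When $a$ observes $b$ at round $t$, $a$ obtains $\tilde d_{ab}(t)=x_b(t)-x_a(t)+\eta$ with $\eta$ of density $N$, independent of everything else. Relevant sets: $R_a(0)=\{a\}$; $R_a(t+1)=R_a(t)\cup R_b(t)$ if $a$ observes $b$ at round $t$, and $R_a(t+1)=R_a(t)$ otherwise. A pattern is independent if whenever $a$ observes $b$ at round $t$, $R_a(t)\cap R_b(t)=\emptyset$. A pattern is synchronous of depth at least $t$ if at every round $s<t$ every sensor observes some other sensor. Algorithm ALG. Each sensor $a$ keeps an opinion $x_a$ and an accuracy $c_a$, with $x_a(0)=X_a(0)$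 and $c_a(0)=1/\mathrm{var}(\Phi_a)$. If $a$ observes $b$ at round $t$, let $\hat c_b(t)=c_b(t)/(1+c_b(t)\,\mathrm{var}(N))$ and set $x_a(t+1)=x_a(t)+\tilde d_{ab}(t)\,\hat c_b(t)/(c_a(t)+\hat c_b(t))$ and $c_a(t+1)=c_a(t)+\hat c_b(t)$; otherwise $x_a(t+1)=x_a(t)$, $c_a(t+1)=c_a(t)$. $X_a(t,\mathrm{ALG})$ is the random variable $x_a(t)$. *)

theory Defs
  imports "HOL-Probability.Probability"
begin

definition var_dens :: "(real \<Rightarrow> real) \<Rightarrow> real" where
  "var_dens \<Phi> = (\<integral>x. x\<^sup>2 * \<Phi> x \<partial>lborel)"

definition smooth_density :: "(real \<Rightarrow> real) \<Rightarrow> bool" where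
  "smooth_density \<Phi> \<longleftrightarrow>
     (\<forall>x. \<Phi> x > 0) \<and>
     (\<forall>x. \<Phi> differentiable (at x)) \<and>
     (\<integral>\<^sup>+x. ennreal ((deriv \<Phi> x)\<^sup>2 / \<Phi> x) \<partial>lborel) < \<infinity> \<and>
     \<Phi> \<in> borel_measurable lborel \<and>
     (\<integral>\<^sup>+x. ennreal (\<Phi> x) \<partial>lborel) = 1 \<and>
     integrable lborel (\<lambda>x. x * \<Phi> x) \<and> (\<integral>x. x * \<Phi> x \<partial>lborel) = 0 \<and>
     integrable lborel (\<lambda>x. x\<^sup>2 * \<Phi> x) \<and> var_dens \<Phi> > 0"

text \<open>A meeting pattern: \<open>M t a = Some b\<close> iff sensor \<open>a\<close> observes \<open>b\<close> at round \<open>t\<close>.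
  Sensors are \<open>0..<n\<close>.\<close>
type_synonym pattern = "nat \<Rightarrow> nat \<Rightarrow> nat option"

definition valid_pattern :: "nat \<Rightarrow> pattern \<Rightarrow> bool" where
  "valid_pattern n M \<longleftrightarrow> (\<forall>t a b. a < n \<longrightarrow> M t a = Some b \<longrightarrow> b < n \<and> b \<noteq> a)"

fun relevant :: "pattern \<Rightarrow> nat \<Rightarrow> nat \<Rightarrow> nat set" where
  "relevant M 0 a = {a}"
| "relevant M (Suc t) a =
     (case M t a of None \<Rightarrow> relevant M t a | Some b \<Rightarrow> relevant M t a \<union> relevant M t b)"

definition independent_pattern :: "nat \<Rightarrow> pattern \<Rightarrow> bool" where
  "independent_pattern n M \<longleftrightarrow>
     (\<forall>t a b. a < n \<longrightarrow> M t a = Some b \<longrightarrow> relevant M t a \<inter> relevant M t b = {})"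

definition synchronous_depth :: "nat \<Rightarrow> pattern \<Rightarrow> nat \<Rightarrow> bool" where
  "synchronous_depth n M t \<longleftrightarrow> (\<forall>s<t. \<forall>a<n. M s a \<noteq> None)"

definition chat :: "real \<Rightarrow> real \<Rightarrow> real" where
  "chat vN c = c / (1 + c * vN)"

fun acc :: "real \<Rightarrow> (nat \<Rightarrow> real \<Rightarrow> real) \<Rightarrow> pattern \<Rightarrow> nat \<Rightarrow> nat \<Rightarrow> real" where
  "acc vN Phis M 0 a = 1 / var_dens (Phis a)"
| "acc vN Phis M (Suc t) a =
     (case M t a of None \<Rightarrow> acc vN Phis M t a
      | Some b \<Rightarrow> acc vN Phis M t a + chat vN (acc vN Phis M t b))"

text \<open>Opinions of ALG, given initial opinions \<open>x0\<close> and the noises \<open>eta (t,a)\<close>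
  affecting the observation made by \<open>a\<close> at round \<open>t\<close>.\<close>
fun opn :: "real \<Rightarrow> (nat \<Rightarrow> real \<Rightarrow> real) \<Rightarrow> pattern \<Rightarrow> (nat \<Rightarrow> real) \<Rightarrow> (nat \<times> nat \<Rightarrow> real)
             \<Rightarrow> nat \<Rightarrow> nat \<Rightarrow> real" where
  "opn vN Phis M x0 eta 0 a = x0 a"
| "opn vN Phis M x0 eta (Suc t) a =
     (case M t a of None \<Rightarrow> opn vN Phis M x0 eta t a
      | Some b \<Rightarrow> opn vN Phis M x0 eta t a
          + (opn vN Phis M x0 eta t b - opn vN Phis M x0 eta t a + eta (t, a))
            * chat vN (acc vN Phis M t b) / (acc vN Phis M t a + chat vN (acc vN Phis M t b)))"

definition sample_space ::
  "(real \<Rightarrow> real) \<Rightarrow> real \<Rightarrow> nat \<Rightarrow> (nat \<Rightarrow> real \<Rightarrow> real) \<Rightarrow> nat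
    \<Rightarrow> ((nat \<Rightarrow> real) \<times> (nat \<times> nat \<Rightarrow> real)) measure" where
  "sample_space N \<tau> n Phis t =
     (\<Pi>\<^sub>M a\<in>{..<n}. density lborel (\<lambda>x. ennreal (Phis a (x - \<tau>))))
     \<Otimes>\<^sub>M (\<Pi>\<^sub>M i\<in>{..<t} \<times> {..<n}. density lborel (\<lambda>x. ennreal (N x)))"

text \<open>Variance (as an extended nonnegative real, so that no junk value can arise).\<close>
definition variance_of :: "'a measure \<Rightarrow> ('a \<Rightarrow> real) \<Rightarrow> ennreal" where
  "variance_of P X = (\<integral>\<^sup>+\<omega>. ennreal ((X \<omega> - (\<integral>\<omega>'. X \<omega>' \<partial>P))\<^sup>2) \<partial>P)"

definition var_ALG ::
  "(real \<Rightarrow> real) \<Rightarrow> real \<Rightarrow> nat \<Rightarrow> (nat \<Rightarrow> real \<Rightarrow> real) \<Rightarrow> pattern \<Rightarrow> nat \<Rightarrow> nat \<Rightarrow> ennreal" where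
  "var_ALG N \<tau> n Phis M t a =
     variance_of (sample_space N \<tau> n Phis t)
       (\<lambda>(x0, eta). opn (var_dens N) Phis M x0 eta t a)"

definition var_sup :: "(real \<Rightarrow> real) set \<Rightarrow> (real \<Rightarrow> real) \<Rightarrow> real \<Rightarrow> nat \<Rightarrow> ennreal" where
  "var_sup F N \<tau> t =
     (SUP (n, Phis, M, a) \<in> {(n, Phis, M, a). n \<ge> 1 \<and> (\<forall>b<n. Phis b \<in> F) \<and>
              valid_pattern n M \<and> independent_pattern n M \<and> synchronous_depth n M t \<and> a < n}.
        var_ALG N \<tau> n Phis M t a)"

end

theory Submission
  imports Defs
begin


lemma pim_moments:
  fixes D :: "'i \<Rightarrow> real measure" and A :: "'i \<Rightarrow> real"
  assumes fin: "finite I" and ps: "\<And>i. i\<in>I \<Longrightarrow> prob_space (D i)"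
   and int1: "\<And>i. i\<in>I \<Longrightarrow> integrable (D i) (\<lambda>x. x - \<mu> i)"
   and m0: "\<And>i. i\<in>I \<Longrightarrow> (\<integral>x. x - \<mu> i \<partial>D i) = 0"
   and int2: "\<And>i. i\<in>I \<Longrightarrow> integrable (D i) (\<lambda>x. (x - \<mu> i)^2)"
   and vv: "\<And>i. i\<in>I \<Longrightarrow> (\<integral>x. (x - \<mu> i)^2 \<partial>D i) = v i"
  shows "integrable (PiM I D) (\<lambda>\<omega>. \<Sum>i\<in>I. A i * (\<omega> i - \<mu> i))"
    "(\<integral>\<omega>. (\<Sum>i\<in>I. A i * (\<omega> i - \<mu> i)) \<partial>PiM I D) = 0"
    "integrable (PiM I D) (\<lambda>\<omega>. (\<Sum>i\<in>I. A i * (\<omega> i - \<mu> i))^2)"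
    "(\<integral>\<omega>. (\<Sum>i\<in>I. A i * (\<omega> i - \<mu> i))^2 \<partial>PiM I D) = (\<Sum>i\<in>I. (A i)^2 * v i)"
proof -
  define D' where "D' i = (if i \<in> I then D i else count_space {undefined})" for i
  interpret D': prob_space "D' i" for i
    using ps by (cases "i \<in> I") (auto intro!: prob_spaceI simp: D'_def)
  interpret product_prob_space D' I
    by unfold_locales
  have PE: "PiM I D = PiM I D'"
    by (rule PiM_cong) (auto simp: D'_def)
  have H1: "integrable (PiM I D') (\<lambda>\<omega>. p (\<omega> i)) \<and> (\<integral>\<omega>. p (\<omega> i) \<partial>PiM I D') = (\<integral>x. p x \<partial>D' i)"
    if "i \<in> I" "integrable (D' i) p" for i and p :: "real \<Rightarrow> real"
  proof -
    define f where "f = (\<lambda>j x. if j = i then p x else 1)"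
    have int: "integrable (D' j) (f j)" if "j \<in> I" for j
      using that \<open>integrable (D' i) p\<close> by (cases "j = i") (auto simp: f_def)
    have eq: "(\<lambda>\<omega>. \<Prod>j\<in>I. f j (\<omega> j)) = (\<lambda>\<omega>. p (\<omega> i))"
      using fin \<open>i \<in> I\<close> by (auto simp: f_def prod.delta)
    have eq2: "(\<Prod>j\<in>I. integral\<^sup>L (D' j) (f j)) = (\<integral>x. p x \<partial>D' i)"
    proof -
      have "(\<Prod>j\<in>I. integral\<^sup>L (D' j) (f j)) = (\<Prod>j\<in>I. if j = i then (\<integral>x. p x \<partial>D' i) else 1)"
        by (intro prod.cong refl) (auto simp: f_def D'.prob_space)
      then show ?thesis using fin \<open>i \<in> I\<close> by (simp add: prod.delta)
    qed
    show ?thesis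
      using product_integrable_prod[OF fin int] product_integral_prod[OF fin int]
      unfolding eq eq2 by simp
  qed
  have H2: "integrable (PiM I D') (\<lambda>\<omega>. p (\<omega> i) * q (\<omega> k)) \<and> (\<integral>\<omega>. p (\<omega> i) * q (\<omega> k) \<partial>PiM I D') = (\<integral>x. p x \<partial>D' i) * (\<integral>x. q x \<partial>D' k)"
    if "i \<in> I" "k \<in> I" "i \<noteq> k" "integrable (D' i) p" "integrable (D' k) q" for i k and p q :: "real \<Rightarrow> real"
  proof -
    define f where "f = (\<lambda>j x. (if j = i then p x else 1) * (if j = k then q x else 1))"
    have int: "integrable (D' j) (f j)" if "j \<in> I" for j
      using that \<open>integrable (D' i) p\<close> \<open>integrable (D' k) q\<close> \<open>i \<noteq> k\<close> by (cases "j = i"; cases "j = k") (auto simp: f_def)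
    have eq: "(\<lambda>\<omega>. \<Prod>j\<in>I. f j (\<omega> j)) = (\<lambda>\<omega>. p (\<omega> i) * q (\<omega> k))"
      using fin \<open>i \<in> I\<close> \<open>k \<in> I\<close> by (auto simp: f_def prod.distrib prod.delta)
    have "(\<Prod>j\<in>I. integral\<^sup>L (D' j) (f j)) = (\<Prod>j\<in>I. (if j = i then (\<integral>x. p x \<partial>D' i) else 1) * (if j = k then (\<integral>x. q x \<partial>D' k) else 1))"
      using \<open>i \<noteq> k\<close> by (intro prod.cong refl) (auto simp: f_def D'.prob_space)
    also have "\<dots> = (\<integral>x. p x \<partial>D' i) * (\<integral>x. q x \<partial>D' k)"
      using fin \<open>i \<in> I\<close> \<open>k \<in> I\<close> by (simp add: prod.distrib prod.delta)
    finally have eq2: "(\<Prod>j\<in>I. integral\<^sup>L (D' j) (f j)) = (\<integral>x. p x \<partial>D' i) * (\<integral>x. q x \<partial>D' k)" .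
    show ?thesis
      using product_integrable_prod[OF fin int] product_integral_prod[OF fin int]
      unfolding eq eq2 by simp
  qed
  have i1: "integrable (D' i) (\<lambda>x. x - \<mu> i)" "(\<integral>x. x - \<mu> i \<partial>D' i) = 0"
    "integrable (D' i) (\<lambda>x. (x - \<mu> i)^2)" "(\<integral>x. (x - \<mu> i)^2 \<partial>D' i) = v i" if "i \<in> I" for i
    using that int1 m0 int2 vv by (auto simp: D'_def)
  have L1: "integrable (PiM I D') (\<lambda>\<omega>. \<omega> i - \<mu> i) \<and> (\<integral>\<omega>. \<omega> i - \<mu> i \<partial>PiM I D') = 0" if "i \<in> I" for i
    using H1[of i "\<lambda>x. x - \<mu> i"] i1[OF that] that by auto
  have L1a: "integrable (PiM I D') (\<lambda>\<omega>. \<omega> i - \<mu> i)" "(\<integral>\<omega>. \<omega> i - \<mu> i \<partial>PiM I D') = 0" if "i \<in> I" for i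
    using L1[OF that] by auto
  show "integrable (PiM I D) (\<lambda>\<omega>. \<Sum>i\<in>I. A i * (\<omega> i - \<mu> i))"
    unfolding PE by (rule Bochner_Integration.integrable_sum, rule integrable_mult_right, erule L1a)
  show "(\<integral>\<omega>. (\<Sum>i\<in>I. A i * (\<omega> i - \<mu> i)) \<partial>PiM I D) = 0"
    unfolding PE
    by (subst Bochner_Integration.integral_sum, rule integrable_mult_right, erule L1a) (simp add: L1a)
  have sq: "(\<lambda>\<omega>. (\<Sum>i\<in>I. A i * (\<omega> i - \<mu> i))^2) = (\<lambda>\<omega>. \<Sum>i\<in>I. \<Sum>k\<in>I. A i * A k * ((\<omega> i - \<mu> i) * (\<omega> k - \<mu> k)))"
    by (auto simp: power2_eq_square sum_product intro!: sum.cong)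
  have T: "integrable (PiM I D') (\<lambda>\<omega>. (\<omega> i - \<mu> i) * (\<omega> k - \<mu> k)) \<and>
     (\<integral>\<omega>. (\<omega> i - \<mu> i) * (\<omega> k - \<mu> k) \<partial>PiM I D') = (if i = k then v i else 0)"
    if "i \<in> I" "k \<in> I" for i k
  proof (cases "i = k")
    case True
    then show ?thesis using H1[of i "\<lambda>x. (x - \<mu> i)^2"] i1 that by (simp add: power2_eq_square)
  next
    case False
    then show ?thesis using H2[of i k "\<lambda>x. x - \<mu> i" "\<lambda>x. x - \<mu> k"] i1 that by simp
  qed
  show "integrable (PiM I D) (\<lambda>\<omega>. (\<Sum>i\<in>I. A i * (\<omega> i - \<mu> i))^2)"
    unfolding PE sq using T by (intro Bochner_Integration.integrable_sum integrable_mult_right) auto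
  have "(\<integral>\<omega>. (\<Sum>i\<in>I. A i * (\<omega> i - \<mu> i))^2 \<partial>PiM I D') = (\<Sum>i\<in>I. \<Sum>k\<in>I. A i * A k * (if i = k then v i else 0))"
    unfolding sq using T
    by (subst Bochner_Integration.integral_sum, force intro!: Bochner_Integration.integrable_sum integrable_mult_right,
        intro sum.cong refl, subst Bochner_Integration.integral_sum, force intro!: integrable_mult_right, auto)
  also have "\<dots> = (\<Sum>i\<in>I. (A i)^2 * v i)"
    using fin by (simp add: if_distrib[of "\<lambda>x. _ * x"] sum.delta power2_eq_square cong: if_cong)
  finally show "(\<integral>\<omega>. (\<Sum>i\<in>I. A i * (\<omega> i - \<mu> i))^2 \<partial>PiM I D) = (\<Sum>i\<in>I. (A i)^2 * v i)"
    unfolding PE .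
qed




lemma pair_moments:
  fixes Y1 :: "'a \<Rightarrow> real" and Y2 :: "'b \<Rightarrow> real"
  assumes ps1: "prob_space M1" and ps2: "prob_space M2"
    and a1: "integrable M1 Y1" "integral\<^sup>L M1 Y1 = 0" "integrable M1 (\<lambda>x. (Y1 x)^2)" "(\<integral>x. (Y1 x)^2 \<partial>M1) = s1"
    and a2: "integrable M2 Y2" "integral\<^sup>L M2 Y2 = 0" "integrable M2 (\<lambda>x. (Y2 x)^2)" "(\<integral>x. (Y2 x)^2 \<partial>M2) = s2"
  shows "integrable (M1 \<Otimes>\<^sub>M M2) (\<lambda>\<omega>. Y1 (fst \<omega>) + Y2 (snd \<omega>))"
    "(\<integral>\<omega>. Y1 (fst \<omega>) + Y2 (snd \<omega>) \<partial>(M1 \<Otimes>\<^sub>M M2)) = 0"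
    "integrable (M1 \<Otimes>\<^sub>M M2) (\<lambda>\<omega>. (Y1 (fst \<omega>) + Y2 (snd \<omega>))^2)"
    "(\<integral>\<omega>. (Y1 (fst \<omega>) + Y2 (snd \<omega>))^2 \<partial>(M1 \<Otimes>\<^sub>M M2)) = s1 + s2"
proof -
  interpret P1: prob_space M1 by (rule ps1)
  interpret P2: prob_space M2 by (rule ps2)
  interpret P: pair_prob_space M1 M2 ..
  have d1: "distr (M1 \<Otimes>\<^sub>M M2) M1 fst = M1" by (rule P2.distr_pair_fst)
  have d2: "distr (M1 \<Otimes>\<^sub>M M2) M2 snd = M2"
  proof (intro measure_eqI)
    fix A assume A: "A \<in> sets (distr (M1 \<Otimes>\<^sub>M M2) M2 snd)"
    from A have "emeasure (distr (M1 \<Otimes>\<^sub>M M2) M2 snd) A = emeasure (M1 \<Otimes>\<^sub>M M2) (space M1 \<times> A)"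
      by (auto simp add: emeasure_distr space_pair_measure dest: sets.sets_into_space intro!: arg_cong2[where f=emeasure])
    with A show "emeasure (distr (M1 \<Otimes>\<^sub>M M2) M2 snd) A = emeasure M2 A"
      using P2.emeasure_pair_measure_Times[of "space M1" M1 A] P1.emeasure_space_1 by simp
  qed simp
  have G1: "integrable (M1 \<Otimes>\<^sub>M M2) (\<lambda>\<omega>. g (fst \<omega>)) \<and> (\<integral>\<omega>. g (fst \<omega>) \<partial>(M1 \<Otimes>\<^sub>M M2)) = integral\<^sup>L M1 g"
    if "integrable M1 g" for g :: "'a \<Rightarrow> real"
  proof -
    have [measurable]: "g \<in> borel_measurable M1" using that by auto
    show ?thesis
      using that integrable_distr_eq[of fst "M1 \<Otimes>\<^sub>M M2" M1 g] integral_distr[of fst "M1 \<Otimes>\<^sub>M M2" M1 g]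
      unfolding d1 by auto
  qed
  have G2: "integrable (M1 \<Otimes>\<^sub>M M2) (\<lambda>\<omega>. g (snd \<omega>)) \<and> (\<integral>\<omega>. g (snd \<omega>) \<partial>(M1 \<Otimes>\<^sub>M M2)) = integral\<^sup>L M2 g"
    if "integrable M2 g" for g :: "'b \<Rightarrow> real"
  proof -
    have [measurable]: "g \<in> borel_measurable M2" using that by auto
    show ?thesis
      using that integrable_distr_eq[of snd "M1 \<Otimes>\<^sub>M M2" M2 g] integral_distr[of snd "M1 \<Otimes>\<^sub>M M2" M2 g]
      unfolding d2 by auto
  qed
  have [measurable]: "Y1 \<in> borel_measurable M1" "Y2 \<in> borel_measurable M2" using a1 a2 by auto
  have i1: "integrable (M1 \<Otimes>\<^sub>M M2) (\<lambda>\<omega>. Y1 (fst \<omega>))" "(\<integral>\<omega>. Y1 (fst \<omega>) \<partial>(M1 \<Otimes>\<^sub>M M2)) = 0"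
    "integrable (M1 \<Otimes>\<^sub>M M2) (\<lambda>\<omega>. (Y1 (fst \<omega>))^2)" "(\<integral>\<omega>. (Y1 (fst \<omega>))^2 \<partial>(M1 \<Otimes>\<^sub>M M2)) = s1"
    using G1[OF a1(1)] G1[OF a1(3)] a1 by auto
  have i2: "integrable (M1 \<Otimes>\<^sub>M M2) (\<lambda>\<omega>. Y2 (snd \<omega>))" "(\<integral>\<omega>. Y2 (snd \<omega>) \<partial>(M1 \<Otimes>\<^sub>M M2)) = 0"
    "integrable (M1 \<Otimes>\<^sub>M M2) (\<lambda>\<omega>. (Y2 (snd \<omega>))^2)" "(\<integral>\<omega>. (Y2 (snd \<omega>))^2 \<partial>(M1 \<Otimes>\<^sub>M M2)) = s2"
    using G2[OF a2(1)] G2[OF a2(3)] a2 by auto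
  have ic: "integrable (M1 \<Otimes>\<^sub>M M2) (\<lambda>\<omega>. Y1 (fst \<omega>) * Y2 (snd \<omega>))"
  proof (rule Bochner_Integration.integrable_bound)
    show "integrable (M1 \<Otimes>\<^sub>M M2) (\<lambda>\<omega>. (Y1 (fst \<omega>))^2 + (Y2 (snd \<omega>))^2)"
      using i1 i2 by auto
    show "(\<lambda>\<omega>. Y1 (fst \<omega>) * Y2 (snd \<omega>)) \<in> borel_measurable (M1 \<Otimes>\<^sub>M M2)" by measurable
    show "AE \<omega> in M1 \<Otimes>\<^sub>M M2. norm (Y1 (fst \<omega>) * Y2 (snd \<omega>)) \<le> norm ((Y1 (fst \<omega>))^2 + (Y2 (snd \<omega>))^2)"
    proof (intro always_eventually allI)
      fix \<omega>
      have "\<bar>Y1 (fst \<omega>) * Y2 (snd \<omega>)\<bar> \<le> (Y1 (fst \<omega>))^2 + (Y2 (snd \<omega>))^2"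
      proof -
        define a where "a = Y1 (fst \<omega>)"
        define b where "b = Y2 (snd \<omega>)"
        have h1: "0 \<le> (\<bar>a\<bar> - \<bar>b\<bar>)^2" by simp
        have h2: "(\<bar>a\<bar> - \<bar>b\<bar>)^2 = \<bar>a\<bar>^2 - 2*(\<bar>a\<bar>*\<bar>b\<bar>) + \<bar>b\<bar>^2" by (simp add: power2_diff)
        have h3: "\<bar>a\<bar>^2 = a^2" "\<bar>b\<bar>^2 = b^2" by simp_all
        have h4: "\<bar>a * b\<bar> = \<bar>a\<bar>*\<bar>b\<bar>" by (simp add: abs_mult)
        have h5: "0 \<le> \<bar>a\<bar>*\<bar>b\<bar>" by simp
        have "\<bar>a * b\<bar> \<le> a^2 + b^2" using h1 h2 h3 h4 h5 by linarith
        then show ?thesis by (simp add: a_def b_def)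
      qed
      then show "norm (Y1 (fst \<omega>) * Y2 (snd \<omega>)) \<le> norm ((Y1 (fst \<omega>))^2 + (Y2 (snd \<omega>))^2)"
        by simp
    qed
  qed
  have ci: "(\<integral>\<omega>. Y1 (fst \<omega>) * Y2 (snd \<omega>) \<partial>(M1 \<Otimes>\<^sub>M M2)) = 0"
  proof -
    have "(\<integral>\<omega>. Y1 (fst \<omega>) * Y2 (snd \<omega>) \<partial>(M1 \<Otimes>\<^sub>M M2)) = (\<integral>x. (\<integral>y. Y1 x * Y2 y \<partial>M2) \<partial>M1)"
      using P.integral_fst'[OF ic] by simp
    also have "\<dots> = 0" using a2 by simp
    finally show ?thesis .
  qed
  have sq: "(\<lambda>\<omega>. (Y1 (fst \<omega>) + Y2 (snd \<omega>))^2) = (\<lambda>\<omega>. (Y1 (fst \<omega>))^2 + 2 * (Y1 (fst \<omega>) * Y2 (snd \<omega>)) + (Y2 (snd \<omega>))^2)"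
    by (auto simp: power2_eq_square algebra_simps)
  show "integrable (M1 \<Otimes>\<^sub>M M2) (\<lambda>\<omega>. Y1 (fst \<omega>) + Y2 (snd \<omega>))" using i1 i2 by auto
  show "(\<integral>\<omega>. Y1 (fst \<omega>) + Y2 (snd \<omega>) \<partial>(M1 \<Otimes>\<^sub>M M2)) = 0" using i1 i2 by simp
  show "integrable (M1 \<Otimes>\<^sub>M M2) (\<lambda>\<omega>. (Y1 (fst \<omega>) + Y2 (snd \<omega>))^2)"
    unfolding sq using i1 i2 ic by auto
  show "(\<integral>\<omega>. (Y1 (fst \<omega>) + Y2 (snd \<omega>))^2 \<partial>(M1 \<Otimes>\<^sub>M M2)) = s1 + s2"
    unfolding sq using i1 i2 ic ci by simp
qed




lemma dens_moments:
  assumes sd: "smooth_density \<Phi>"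
  shows "prob_space (density lborel (\<lambda>x. ennreal (\<Phi> (x - \<tau>))))"
    "integrable (density lborel (\<lambda>x. ennreal (\<Phi> (x - \<tau>)))) (\<lambda>x. x - \<tau>)"
    "(\<integral>x. x - \<tau> \<partial>density lborel (\<lambda>x. ennreal (\<Phi> (x - \<tau>)))) = 0"
    "integrable (density lborel (\<lambda>x. ennreal (\<Phi> (x - \<tau>)))) (\<lambda>x. (x - \<tau>)^2)"
    "(\<integral>x. (x - \<tau>)^2 \<partial>density lborel (\<lambda>x. ennreal (\<Phi> (x - \<tau>)))) = var_dens \<Phi>"
proof -
  have pos: "\<And>x. \<Phi> x > 0" and mb: "\<Phi> \<in> borel_measurable lborel"
    and one: "(\<integral>\<^sup>+x. ennreal (\<Phi> x) \<partial>lborel) = 1"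
    and i1: "integrable lborel (\<lambda>x. x * \<Phi> x)" and m1: "(\<integral>x. x * \<Phi> x \<partial>lborel) = 0"
    and i2: "integrable lborel (\<lambda>x. x\<^sup>2 * \<Phi> x)"
    using sd unfolding smooth_density_def by auto
  have mb'[measurable]: "\<Phi> \<in> borel_measurable borel" using mb by simp
  have g[measurable]: "(\<lambda>x. \<Phi> (x - \<tau>)) \<in> borel_measurable lborel" by measurable
  have nn: "AE x in lborel. 0 \<le> \<Phi> (x - \<tau>)" using pos by (simp add: less_imp_le)
  let ?D = "density lborel (\<lambda>x. ennreal (\<Phi> (x - \<tau>)))"
  have "emeasure ?D (space ?D) = (\<integral>\<^sup>+x. ennreal (\<Phi> (x - \<tau>)) \<partial>lborel)"
    by (simp add: emeasure_density)
  also have "\<dots> = (\<integral>\<^sup>+x. ennreal (\<Phi> x) \<partial>lborel)"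
    using nn_integral_real_affine[of "\<lambda>x. ennreal (\<Phi> x)" 1 "-\<tau>"] by simp
  finally show "prob_space ?D" using one by (intro prob_spaceI) simp
  have e1: "(\<lambda>x. \<Phi> (x - \<tau>) * (x - \<tau>)) = (\<lambda>x. (\<lambda>y. y * \<Phi> y) (-\<tau> + 1 * x))"
    by (auto simp: fun_eq_iff)
  have e2: "(\<lambda>x. \<Phi> (x - \<tau>) * (x - \<tau>)^2) = (\<lambda>x. (\<lambda>y. y^2 * \<Phi> y) (-\<tau> + 1 * x))"
    by (auto simp: fun_eq_iff)
  show "integrable ?D (\<lambda>x. x - \<tau>)"
    using lborel_integrable_real_affine_iff[of 1 "\<lambda>y. y * \<Phi> y" "-\<tau>"] i1
    by (subst integrable_density[OF _ g nn]) (auto simp: e1[symmetric] mult.commute)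
  show "integrable ?D (\<lambda>x. (x - \<tau>)^2)"
    using lborel_integrable_real_affine_iff[of 1 "\<lambda>y. y^2 * \<Phi> y" "-\<tau>"] i2
    by (subst integrable_density[OF _ g nn]) (auto simp: e2[symmetric] mult.commute)
  show "(\<integral>x. x - \<tau> \<partial>?D) = 0"
    using lborel_integral_real_affine[of 1 "\<lambda>y. y * \<Phi> y" "-\<tau>"] m1
    by (subst integral_density[OF _ g nn]) (auto simp: e1[symmetric] mult.commute)
  show "(\<integral>x. (x - \<tau>)^2 \<partial>?D) = var_dens \<Phi>"
    using lborel_integral_real_affine[of 1 "\<lambda>y. y^2 * \<Phi> y" "-\<tau>"]
    by (subst integral_density[OF _ g nn]) (auto simp: e2[symmetric] var_dens_def mult.commute)
qed




definition wt :: "real \<Rightarrow> (nat \<Rightarrow> real \<Rightarrow> real) \<Rightarrow> pattern \<Rightarrow> nat \<Rightarrow> nat \<Rightarrow> nat \<Rightarrow> real" where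
  "wt vN Phis M t a b = chat vN (acc vN Phis M t b) / (acc vN Phis M t a + chat vN (acc vN Phis M t b))"

fun cA :: "real \<Rightarrow> (nat \<Rightarrow> real \<Rightarrow> real) \<Rightarrow> pattern \<Rightarrow> nat \<Rightarrow> nat \<Rightarrow> nat \<Rightarrow> real" where
  "cA vN Phis M 0 a i = (if i = a then 1 else 0)"
| "cA vN Phis M (Suc t) a i = (case M t a of None \<Rightarrow> cA vN Phis M t a i
     | Some b \<Rightarrow> cA vN Phis M t a i + (cA vN Phis M t b i - cA vN Phis M t a i) * wt vN Phis M t a b)"

fun cB :: "real \<Rightarrow> (nat \<Rightarrow> real \<Rightarrow> real) \<Rightarrow> pattern \<Rightarrow> nat \<Rightarrow> nat \<Rightarrow> nat \<times> nat \<Rightarrow> real" where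
  "cB vN Phis M 0 a j = 0"
| "cB vN Phis M (Suc t) a j = (case M t a of None \<Rightarrow> cB vN Phis M t a j
     | Some b \<Rightarrow> cB vN Phis M t a j + (cB vN Phis M t b j - cB vN Phis M t a j + (if j = (t, a) then 1 else 0)) * wt vN Phis M t a b)"

lemma lin_comb:
  fixes f g h x :: "'j \<Rightarrow> real"
  shows "(\<Sum>j\<in>S. (f j + (g j - f j + h j) * c) * x j) =
    (\<Sum>j\<in>S. f j * x j) + ((\<Sum>j\<in>S. g j * x j) - (\<Sum>j\<in>S. f j * x j) + (\<Sum>j\<in>S. h j * x j)) * c"
proof -
  have "(\<Sum>j\<in>S. (f j + (g j - f j + h j) * c) * x j) = (\<Sum>j\<in>S. f j * x j + (g j * x j - f j * x j + h j * x j) * c)"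
    by (intro sum.cong refl) (simp add: algebra_simps)
  also have "\<dots> = (\<Sum>j\<in>S. f j * x j) + (\<Sum>j\<in>S. (g j * x j - f j * x j + h j * x j) * c)"
    by (simp add: sum.distrib)
  also have "(\<Sum>j\<in>S. (g j * x j - f j * x j + h j * x j) * c) = (\<Sum>j\<in>S. (g j * x j - f j * x j + h j * x j)) * c"
    by (simp add: sum_distrib_right)
  also have "(\<Sum>j\<in>S. (g j * x j - f j * x j + h j * x j)) = (\<Sum>j\<in>S. g j * x j) - (\<Sum>j\<in>S. f j * x j) + (\<Sum>j\<in>S. h j * x j)"
    by (simp add: sum.distrib sum_subtractf)
  finally show ?thesis .
qed

lemma opn_repr:
  assumes valid: "valid_pattern n M"
  shows "a < n \<Longrightarrow> finite S \<Longrightarrow> {..<t} \<times> {..<n} \<subseteq> S \<Longrightarrow>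
    opn vN Phis M x0 eta t a = (\<Sum>i<n. cA vN Phis M t a i * x0 i) + (\<Sum>j\<in>S. cB vN Phis M t a j * eta j)"
proof (induction t arbitrary: a)
  case 0
  then show ?case by (simp add: if_distrib[of "\<lambda>y. y * _"] cong: if_cong)
next
  case (Suc t)
  have S': "{..<t} \<times> {..<n} \<subseteq> S" using Suc.prems by auto
  show ?case
  proof (cases "M t a")
    case None
    then show ?thesis using Suc.IH[OF Suc.prems(1,2) S'] by simp
  next
    case (Some b)
    have bn: "b < n" using valid Some Suc.prems(1) unfolding valid_pattern_def by blast
    have ta: "(t, a) \<in> S" using Suc.prems by auto
    have d: "(\<Sum>j\<in>S. (if j = (t, a) then 1 else 0) * eta j) = eta (t, a)"
      using Suc.prems(2) ta by (simp add: if_distrib[of "\<lambda>y. y * _"] cong: if_cong)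
    let ?w = "wt vN Phis M t a b"
    have "opn vN Phis M x0 eta (Suc t) a = opn vN Phis M x0 eta t a
          + (opn vN Phis M x0 eta t b - opn vN Phis M x0 eta t a + eta (t, a)) * ?w"
      using Some by (simp add: wt_def)
    also have "\<dots> = (\<Sum>i<n. cA vN Phis M (Suc t) a i * x0 i) + (\<Sum>j\<in>S. cB vN Phis M (Suc t) a j * eta j)"
      using Some Suc.IH[OF Suc.prems(1,2) S'] Suc.IH[OF bn Suc.prems(2) S'] d
        lin_comb[of "cA vN Phis M t a" "cA vN Phis M t b" "\<lambda>_. 0" ?w x0 "{..<n}"]
        lin_comb[of "cB vN Phis M t a" "cB vN Phis M t b" "\<lambda>j. if j = (t, a) then 1 else 0" ?w eta S]
      by (simp add: algebra_simps)
    finally show ?thesis .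
  qed
qed

lemma rel_self: "a \<in> relevant M t a"
  by (induction t arbitrary: a) (auto split: option.split)

lemma rel_mono_step: "relevant M t a \<subseteq> relevant M (Suc t) a"
  by (auto split: option.split)

lemma cA_supp: "cA vN Phis M t a i \<noteq> 0 \<Longrightarrow> i \<in> relevant M t a"
proof (induction t arbitrary: a)
  case 0 then show ?case by (simp split: if_splits)
next
  case (Suc t)
  show ?case
  proof (cases "M t a")
    case None then show ?thesis using Suc by simp
  next
    case (Some b)
    from Suc.prems Some have "cA vN Phis M t a i \<noteq> 0 \<or> cA vN Phis M t b i \<noteq> 0" by auto
    then show ?thesis using Suc.IH Some by auto
  qed
qed

lemma cB_supp: "cB vN Phis M t a (s, c) \<noteq> 0 \<Longrightarrow> s < t \<and> c \<in> relevant M t a"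
proof (induction t arbitrary: a)
  case 0 then show ?case by simp
next
  case (Suc t)
  show ?case
  proof (cases "M t a")
    case None then show ?thesis using Suc.IH[of a] Suc.prems None by force
  next
    case (Some b)
    from Suc.prems Some have "cB vN Phis M t a (s, c) \<noteq> 0 \<or> cB vN Phis M t b (s, c) \<noteq> 0 \<or> (s, c) = (t, a)" by (auto split: if_splits)
    then show ?thesis using Suc.IH[of a] Suc.IH[of b] Some rel_self[of a M t] by (auto split: if_splits)
  qed
qed

lemma rel_sub: assumes "valid_pattern n M" shows "a < n \<Longrightarrow> relevant M t a \<subseteq> {..<n}"
proof (induction t arbitrary: a)
  case 0 then show ?case by simp
next
  case (Suc t)
  then show ?case using assms unfolding valid_pattern_def by (auto split: option.split)
qed

lemma chat_pos: "0 < c \<Longrightarrow> 0 \<le> v \<Longrightarrow> 0 < chat v c"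
  unfolding chat_def by (simp add: add_pos_nonneg)

lemma chat_mono: "0 < x \<Longrightarrow> x \<le> y \<Longrightarrow> 0 \<le> v \<Longrightarrow> chat v x \<le> chat v y"
  unfolding chat_def
proof -
  assume a: "0 < x" "x \<le> y" "0 \<le> v"
  have p1: "0 < 1 + x * v" "0 < 1 + y * v" using a by (simp_all add: add_pos_nonneg)
  have "x * (1 + y * v) \<le> y * (1 + x * v)" using a by (simp add: algebra_simps)
  then show "x / (1 + x * v) \<le> y / (1 + y * v)" using p1 by (simp add: divide_simps)
qed

lemma acc_pos:
  assumes valid: "valid_pattern n M" and vp: "\<forall>b<n. var_dens (Phis b) > 0" and vN: "0 \<le> vN"
  shows "a < n \<Longrightarrow> acc vN Phis M t a > 0"
proof (induction t arbitrary: a)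
  case 0 then show ?case using vp by simp
next
  case (Suc t)
  show ?case
  proof (cases "M t a")
    case None then show ?thesis using Suc by simp
  next
    case (Some b)
    have bn: "b < n" using valid Some Suc.prems(1) unfolding valid_pattern_def by blast
    show ?thesis using Some Suc.IH[OF Suc.prems] chat_pos[OF Suc.IH[OF bn] vN] by simp
  qed
qed

lemma sq1: "x * y = 0 \<Longrightarrow> (x + (y - x) * w)^2 = (1 - w)^2 * x^2 + w^2 * y^2"
  for x y w :: real
  by (cases "x = 0") (auto simp: power2_eq_square algebra_simps)

lemma sq2: "x * y = 0 \<Longrightarrow> x * d = 0 \<Longrightarrow> y * d = 0 \<Longrightarrow>
   (x + (y - x + d) * w)^2 = (1 - w)^2 * x^2 + w^2 * y^2 + w^2 * d^2"
  for x y d w :: real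
  by (cases "x = 0"; cases "y = 0") (auto simp: power2_eq_square algebra_simps)

lemma final_alg:
  fixes ca cb v :: real
  assumes "0 < ca" "0 < cb" "0 \<le> v"
  assumes ch_def: "ch = cb / (1 + cb * v)"
  assumes w_def: "w = ch / (ca + ch)"
  shows "(1 - w)^2 * (1 / ca) + w^2 * (1 / cb) + w^2 * v = 1 / (ca + ch)"
proof -
  have p: "0 < 1 + cb * v" using assms by (simp add: add_pos_nonneg)
  have chp: "0 < ch" unfolding ch_def using assms p by simp
  have inv: "1 / cb + v = 1 / ch" unfolding ch_def using assms p by (simp add: field_simps)
  have A: "(1 - w)^2 * (1 / ca) + w^2 * (1 / cb) + w^2 * v = (1 - w)^2 * (1 / ca) + w^2 * (1 / ch)"
  proof -
    have e: "w^2 * (1 / cb + v) = w^2 * (1 / ch)" by (simp only: inv)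
    have "w^2 * (1 / cb) + w^2 * v = w^2 * (1 / ch)" using e by (simp add: distrib_left)
    then show ?thesis by simp
  qed
  have B: "1 - w = ca / (ca + ch)" unfolding w_def using assms(1) chp by (simp add: field_simps)
  have C: "(ca / (ca + ch))^2 * (1 / ca) + w^2 * (1 / ch) = 1 / (ca + ch)"
  proof -
    have sp: "0 < ca + ch" using assms(1) chp by simp
    have q1: "(ca / (ca + ch))^2 * (1 / ca) = ca / (ca + ch)^2"
      using assms(1) sp by (simp add: power2_eq_square field_simps)
    have q2: "(ch / (ca + ch))^2 * (1 / ch) = ch / (ca + ch)^2"
      using chp sp by (simp add: power2_eq_square field_simps)
    have q3: "ca / (ca + ch)^2 + ch / (ca + ch)^2 = 1 / (ca + ch)"
      using sp by (simp add: power2_eq_square add_divide_distrib[symmetric])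
    show ?thesis unfolding w_def using q1 q2 q3 by simp
  qed
  show ?thesis using A B C by simp
qed

lemma Q_ident:
  assumes valid: "valid_pattern n M" and indep: "independent_pattern n M"
    and vp: "\<forall>b<n. var_dens (Phis b) > 0" and vN: "0 \<le> vN"
  shows "a < n \<Longrightarrow> finite S \<Longrightarrow> {..<t} \<times> {..<n} \<subseteq> S \<Longrightarrow>
    (\<Sum>i<n. (cA vN Phis M t a i)^2 * var_dens (Phis i)) + (\<Sum>j\<in>S. (cB vN Phis M t a j)^2 * vN)
      = 1 / acc vN Phis M t a"
proof (induction t arbitrary: a)
  case 0
  then show ?case by (simp add: if_distrib[of "\<lambda>y. y^2 * _"] cong: if_cong)
next
  case (Suc t)
  have S': "{..<t} \<times> {..<n} \<subseteq> S" using Suc.prems by auto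
  show ?case
  proof (cases "M t a")
    case None
    then show ?thesis using Suc.IH[OF Suc.prems(1,2) S'] by simp
  next
    case (Some b)
    have bn: "b < n" using valid Some Suc.prems(1) unfolding valid_pattern_def by blast
    have disj: "relevant M t a \<inter> relevant M t b = {}"
      using indep Some Suc.prems(1) unfolding independent_pattern_def by blast
    have ta: "(t, a) \<in> S" using Suc.prems by auto
    let ?w = "wt vN Phis M t a b"
    let ?A = "cA vN Phis M t a" and ?B = "cA vN Phis M t b"
    let ?C = "cB vN Phis M t a" and ?E = "cB vN Phis M t b"
    let ?d = "\<lambda>j::nat\<times>nat. if j = (t, a) then 1 else (0::real)"
    have AB: "?A i * ?B i = 0" for i
      using cA_supp[of vN Phis M t a i] cA_supp[of vN Phis M t b i] disj by auto
    have CE: "?C j * ?E j = 0" for j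
      using cB_supp[of vN Phis M t a "fst j" "snd j"] cB_supp[of vN Phis M t b "fst j" "snd j"] disj
      by (cases j) auto
    have Cd: "?C j * ?d j = 0" for j
      using cB_supp[of vN Phis M t a t a] by auto
    have Ed: "?E j * ?d j = 0" for j
      using cB_supp[of vN Phis M t b t a] by auto
    have s1: "(\<Sum>i<n. (cA vN Phis M (Suc t) a i)^2 * var_dens (Phis i)) =
       (1 - ?w)^2 * (\<Sum>i<n. (?A i)^2 * var_dens (Phis i)) + ?w^2 * (\<Sum>i<n. (?B i)^2 * var_dens (Phis i))"
    proof -
      have "(\<Sum>i<n. (cA vN Phis M (Suc t) a i)^2 * var_dens (Phis i)) =
        (\<Sum>i<n. (1 - ?w)^2 * ((?A i)^2 * var_dens (Phis i)) + ?w^2 * ((?B i)^2 * var_dens (Phis i)))"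
        by (intro sum.cong refl) (simp only: Some cA.simps option.case sq1[OF AB], simp add: algebra_simps)
      then show ?thesis by (simp add: sum.distrib sum_distrib_left)
    qed
    have s2: "(\<Sum>j\<in>S. (cB vN Phis M (Suc t) a j)^2 * vN) =
       (1 - ?w)^2 * (\<Sum>j\<in>S. (?C j)^2 * vN) + ?w^2 * (\<Sum>j\<in>S. (?E j)^2 * vN) + ?w^2 * (\<Sum>j\<in>S. (?d j)^2 * vN)"
    proof -
      have "(\<Sum>j\<in>S. (cB vN Phis M (Suc t) a j)^2 * vN) =
        (\<Sum>j\<in>S. (1 - ?w)^2 * ((?C j)^2 * vN) + ?w^2 * ((?E j)^2 * vN) + ?w^2 * ((?d j)^2 * vN))"
        by (intro sum.cong refl) (simp only: Some cB.simps option.case sq2[OF CE Cd Ed], simp add: algebra_simps)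
      then show ?thesis by (simp add: sum.distrib sum_distrib_left)
    qed
    have s3: "(\<Sum>j\<in>S. (?d j)^2 * vN) = vN"
      using Suc.prems(2) ta by (simp add: if_distrib[of "\<lambda>y. y^2 * _"] cong: if_cong)
    have ca: "0 < acc vN Phis M t a" and cb: "0 < acc vN Phis M t b"
      using acc_pos[OF valid vp vN] Suc.prems(1) bn by auto
    have "(\<Sum>i<n. (cA vN Phis M (Suc t) a i)^2 * var_dens (Phis i)) + (\<Sum>j\<in>S. (cB vN Phis M (Suc t) a j)^2 * vN)
       = (1 - ?w)^2 * (1 / acc vN Phis M t a) + ?w^2 * (1 / acc vN Phis M t b) + ?w^2 * vN"
      unfolding s1 s2 s3
      using Suc.IH[OF Suc.prems(1,2) S'] Suc.IH[OF bn Suc.prems(2) S']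
      by (simp add: algebra_simps flip: distrib_left)
    also have "\<dots> = 1 / acc vN Phis M (Suc t) a"
      using final_alg[OF ca cb vN refl refl] Some by (simp add: wt_def chat_def)
    finally show ?thesis .
  qed
qed

lemma growth:
  assumes valid: "valid_pattern n M" and vN: "0 \<le> vN" and c0: "0 < c0"
    and base: "\<forall>b<n. c0 \<le> acc vN Phis M 0 b"
  shows "synchronous_depth n M t \<Longrightarrow> a < n \<Longrightarrow> c0 + real t * chat vN c0 \<le> acc vN Phis M t a"
proof (induction t arbitrary: a)
  case 0 then show ?case using base by simp
next
  case (Suc t)
  have sd: "synchronous_depth n M t" using Suc.prems(1) unfolding synchronous_depth_def by auto
  obtain b where Some: "M t a = Some b" using Suc.prems unfolding synchronous_depth_def by auto
  have bn: "b < n" using valid Some Suc.prems(2) unfolding valid_pattern_def by blast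
  have dpos: "0 < chat vN c0" using chat_pos[OF c0 vN] .
  have IHa: "c0 + real t * chat vN c0 \<le> acc vN Phis M t a" using Suc.IH[OF sd Suc.prems(2)] .
  have IHb: "c0 + real t * chat vN c0 \<le> acc vN Phis M t b" using Suc.IH[OF sd bn] .
  have "c0 \<le> acc vN Phis M t b" using IHb dpos by (smt (verit) of_nat_0_le_iff mult_nonneg_nonneg)
  then have "chat vN c0 \<le> chat vN (acc vN Phis M t b)" using chat_mono[OF c0 _ vN] by blast
  then show ?case using IHa Some by (simp add: algebra_simps)
qed




lemma var_ALG_eq:
  assumes sdP: "\<forall>b<n. smooth_density (Phis b)" and sdN: "smooth_density N"
    and valid: "valid_pattern n M" and indep: "independent_pattern n M" and an: "a < n"
  shows "var_ALG N \<tau> n Phis M t a = ennreal (1 / acc (var_dens N) Phis M t a)"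
proof -
  define vN where "vN = var_dens N"
  have vN: "0 < vN" using sdN unfolding vN_def smooth_density_def by auto
  have vp: "\<forall>b<n. var_dens (Phis b) > 0" using sdP unfolding smooth_density_def by auto
  define J where "J = {..<t} \<times> {..<n}"
  have finJ: "finite J" unfolding J_def by auto
  define D where "D = (\<lambda>a. density lborel (\<lambda>x. ennreal (Phis a (x - \<tau>))))"
  define E where "E = (\<lambda>j::nat\<times>nat. density lborel (\<lambda>x. ennreal (N x)))"
  define M1 where "M1 = PiM {..<n} D"
  define M2 where "M2 = PiM J E"
  have P: "sample_space N \<tau> n Phis t = M1 \<Otimes>\<^sub>M M2"
    unfolding sample_space_def M1_def M2_def D_def E_def J_def by simp
  note dP = dens_moments[of "Phis i" \<tau> for i]
  note dN = dens_moments[OF sdN, of 0, simplified]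
  let ?A = "cA vN Phis M t a" and ?B = "cB vN Phis M t a"
  define Y1 where "Y1 = (\<lambda>\<omega>. \<Sum>i\<in>{..<n}. ?A i * (\<omega> i - \<tau>))"
  define Y2 where "Y2 = (\<lambda>\<omega>. \<Sum>j\<in>J. ?B j * (\<omega> j - 0))"
  note m1 = pim_moments[of "{..<n}" D "\<lambda>_. \<tau>" "\<lambda>i. var_dens (Phis i)" ?A]
  note m2 = pim_moments[of J E "\<lambda>_. 0" "\<lambda>_. vN" ?B]
  have ps1: "prob_space M1" unfolding M1_def
    by (rule prob_space_PiM) (use dP sdP in \<open>auto simp: D_def\<close>)
  have ps2: "prob_space M2" unfolding M2_def
    by (rule prob_space_PiM) (use dN in \<open>auto simp: E_def\<close>)
  have h1: "integrable M1 Y1" "integral\<^sup>L M1 Y1 = 0" "integrable M1 (\<lambda>x. (Y1 x)^2)"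
    "(\<integral>x. (Y1 x)^2 \<partial>M1) = (\<Sum>i\<in>{..<n}. (?A i)^2 * var_dens (Phis i))"
    unfolding M1_def Y1_def using m1 dP sdP by (auto simp: D_def)
  have h2: "integrable M2 Y2" "integral\<^sup>L M2 Y2 = 0" "integrable M2 (\<lambda>x. (Y2 x)^2)"
    "(\<integral>x. (Y2 x)^2 \<partial>M2) = (\<Sum>j\<in>J. (?B j)^2 * vN)"
    unfolding M2_def Y2_def using m2[OF finJ] dN by (auto simp: E_def vN_def)
  note pm = pair_moments[OF ps1 ps2 h1 h2]
  interpret P1: prob_space M1 by (rule ps1)
  interpret P2: prob_space M2 by (rule ps2)
  interpret PP: pair_prob_space M1 M2 ..
  define c where "c = (\<Sum>i\<in>{..<n}. ?A i * \<tau>)"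
  have X: "(\<lambda>(x0, eta). opn vN Phis M x0 eta t a) = (\<lambda>\<omega>. Y1 (fst \<omega>) + Y2 (snd \<omega>) + c)"
  proof (intro ext, clarify)
    fix x0 eta
    have "opn vN Phis M x0 eta t a = (\<Sum>i<n. ?A i * x0 i) + (\<Sum>j\<in>J. ?B j * eta j)"
      using opn_repr[OF valid an finJ] unfolding J_def by simp
    then show "opn vN Phis M x0 eta t a = Y1 (fst (x0, eta)) + Y2 (snd (x0, eta)) + c"
      unfolding Y1_def Y2_def c_def by (simp add: algebra_simps sum.distrib sum_subtractf)
  qed
  have EX: "(\<integral>\<omega>. Y1 (fst \<omega>) + Y2 (snd \<omega>) + c \<partial>(M1 \<Otimes>\<^sub>M M2)) = c"
    using pm(1,2) by (simp add: PP.prob_space)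
  have "var_ALG N \<tau> n Phis M t a = (\<integral>\<^sup>+\<omega>. ennreal ((Y1 (fst \<omega>) + Y2 (snd \<omega>))^2) \<partial>(M1 \<Otimes>\<^sub>M M2))"
    unfolding var_ALG_def variance_of_def P vN_def[symmetric] X EX by simp
  also have "\<dots> = ennreal (\<integral>\<omega>. (Y1 (fst \<omega>) + Y2 (snd \<omega>))^2 \<partial>(M1 \<Otimes>\<^sub>M M2))"
    using pm(3) by (intro nn_integral_eq_integral) auto
  also have "\<dots> = ennreal (1 / acc vN Phis M t a)"
    using pm(4) Q_ident[OF valid indep vp less_imp_le[OF vN] an finJ] unfolding J_def by simp
  finally show ?thesis unfolding vN_def .
qed




theorem claim2:
  fixes F :: "(real \<Rightarrow> real) set" and N :: "real \<Rightarrow> real" and \<tau> :: real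
  assumes "finite F"
    and "\<forall>\<Phi>\<in>F. smooth_density \<Phi>"
    and "N \<in> F"
  shows "(\<lambda>t. var_sup F N \<tau> t) \<longlonglongrightarrow> 0"
proof -
  note finF = assms(1) and sdF = assms(2) and NF = assms(3)
  define vN where "vN = var_dens N"
  have sdN: "smooth_density N" using sdF NF by auto
  have vN: "0 < vN" using sdN unfolding vN_def smooth_density_def by auto
  define c0 where "c0 = Min ((\<lambda>\<Phi>. 1 / var_dens \<Phi>) ` F)"
  have ne: "(\<lambda>\<Phi>. 1 / var_dens \<Phi>) ` F \<noteq> {}" using NF by auto
  have c0: "0 < c0" unfolding c0_def using finF ne sdF
    by (subst Min_gr_iff) (auto simp: smooth_density_def)
  have c0le: "c0 \<le> 1 / var_dens \<Phi>" if "\<Phi> \<in> F" for \<Phi>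
    unfolding c0_def using finF that by (intro Min_le) auto
  define d where "d = chat vN c0"
  have dpos: "0 < d" unfolding d_def using chat_pos[OF c0 less_imp_le[OF vN]] .
  have bound: "var_sup F N \<tau> t \<le> ennreal (1 / (c0 + real t * d))" for t
    unfolding var_sup_def
  proof (rule SUP_least, clarify)
    fix n Phis M a
    assume H: "1 \<le> n" "\<forall>b<n. Phis b \<in> F" "valid_pattern n M" "independent_pattern n M"
      "synchronous_depth n M t" "a < n"
    have sdP: "\<forall>b<n. smooth_density (Phis b)" using H(2) sdF by auto
    have eq: "var_ALG N \<tau> n Phis M t a = ennreal (1 / acc vN Phis M t a)"
      unfolding vN_def by (rule var_ALG_eq[OF sdP sdN H(3,4,6)])
    have base: "\<forall>b<n. c0 \<le> acc vN Phis M 0 b" using H(2) c0le by auto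
    have g: "c0 + real t * d \<le> acc vN Phis M t a"
      unfolding d_def by (rule growth[OF H(3) less_imp_le[OF vN] c0 base H(5,6)])
    have p: "0 < c0 + real t * d" using c0 dpos by (simp add: add_pos_nonneg)
    have "1 / acc vN Phis M t a \<le> 1 / (c0 + real t * d)"
      using g p by (simp add: divide_left_mono)
    then show "var_ALG N \<tau> n Phis M t a \<le> ennreal (1 / (c0 + real t * d))"
      unfolding eq by (rule ennreal_leI)
  qed
  have lim: "(\<lambda>t. 1 / (c0 + real t * d)) \<longlonglongrightarrow> 0"
  proof (rule tendsto_divide_0[OF tendsto_const])
    have "filterlim (\<lambda>t. d * real t) at_top sequentially"
      by (rule filterlim_tendsto_pos_mult_at_top[OF tendsto_const dpos filterlim_real_sequentially])
    then have "filterlim (\<lambda>t. c0 + d * real t) at_top sequentially"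
      by (rule filterlim_tendsto_add_at_top[OF tendsto_const])
    then show "filterlim (\<lambda>t. c0 + real t * d) at_infinity sequentially"
      by (intro filterlim_at_top_imp_at_infinity) (simp add: mult.commute)
  qed
  have lim2: "(\<lambda>t. ennreal (1 / (c0 + real t * d))) \<longlonglongrightarrow> 0"
    using tendsto_ennrealI[OF lim] by simp
  show ?thesis
    by (rule tendsto_sandwich[OF _ _ tendsto_const lim2]) (simp_all add: bound)
qed


end
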